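(* Let $P$, $P'$ and $Q$ be transition matrices on the finite set $S$, all reversible with respect to $\pi$, with $P$ and $P'$ irreducible, and let $0<a<1$. Then $P'$ efficiency-dominates $P$ if and only if $aP'+(1-a)Q$ efficiency-dominates $aP+(1-a)Q$.
   Context: $S$ is a finite set, and $\pi$ is a probability distribution on $S$ with $\pi(x)>0$ for all $x$. A transition matrix $P$ is reversible with respect to $\pi$ if $\pi(x)P(x,y)=\pi(y)P(y,x)$ for all $x,y$; irreducible if every state can be reached from every other with positive probability in some number of steps. For a Markov chain $X_1,X_2,\dots$ with transition matrix $P$ and $X_1\sim\pi$, $v(f,P)=\lim_{N\to\infty}\frac1N\mathrm{Var}\big(\sum_{i=1}^N f(X_i)\big)$. $P$ efficiency-dominates $Q$ if $v(f,P)\le v(f,Q)$ for all $f:S\to\mathbb R$. *)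

theory Defs
  imports Complex_Main
begin

definition prob_dist :: "('a::finite \<Rightarrow> real) \<Rightarrow> bool" where
  "prob_dist \<pi> \<longleftrightarrow> (\<forall>x. \<pi> x > 0) \<and> (\<Sum>x\<in>UNIV. \<pi> x) = 1"

definition transition_matrix :: "('a::finite \<Rightarrow> 'a \<Rightarrow> real) \<Rightarrow> bool" where
  "transition_matrix P \<longleftrightarrow> (\<forall>x y. 0 \<le> P x y) \<and> (\<forall>x. (\<Sum>y\<in>UNIV. P x y) = 1)"

definition reversible :: "('a::finite \<Rightarrow> real) \<Rightarrow> ('a \<Rightarrow> 'a \<Rightarrow> real) \<Rightarrow> bool" where
  "reversible \<pi> P \<longleftrightarrow> (\<forall>x y. \<pi> x * P x y = \<pi> y * P y x)"

fun mat_pow :: "('a::finite \<Rightarrow> 'a \<Rightarrow> real) \<Rightarrow> nat \<Rightarrow> 'a \<Rightarrow> 'a \<Rightarrow> real" where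
  "mat_pow P 0 x y = (if x = y then 1 else 0)"
| "mat_pow P (Suc n) x y = (\<Sum>z\<in>UNIV. mat_pow P n x z * P z y)"

definition irreducible_chain :: "('a::finite \<Rightarrow> 'a \<Rightarrow> real) \<Rightarrow> bool" where
  "irreducible_chain P \<longleftrightarrow> (\<forall>x y. \<exists>n. mat_pow P n x y > 0)"

fun chain_weight :: "('a \<Rightarrow> 'a \<Rightarrow> real) \<Rightarrow> 'a \<Rightarrow> 'a list \<Rightarrow> real" where
  "chain_weight P x [] = 1"
| "chain_weight P x (y # ys) = P x y * chain_weight P y ys"

fun path_prob :: "('a \<Rightarrow> real) \<Rightarrow> ('a \<Rightarrow> 'a \<Rightarrow> real) \<Rightarrow> 'a list \<Rightarrow> real" where
  "path_prob \<pi> P [] = 1"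
| "path_prob \<pi> P (x # xs) = \<pi> x * chain_weight P x xs"

definition path_expect ::
  "('a::finite \<Rightarrow> real) \<Rightarrow> ('a \<Rightarrow> 'a \<Rightarrow> real) \<Rightarrow> nat \<Rightarrow> ('a list \<Rightarrow> real) \<Rightarrow> real" where
  "path_expect \<pi> P N g = (\<Sum>xs\<in>{xs. length xs = N}. path_prob \<pi> P xs * g xs)"

definition sum_variance ::
  "('a::finite \<Rightarrow> real) \<Rightarrow> ('a \<Rightarrow> 'a \<Rightarrow> real) \<Rightarrow> ('a \<Rightarrow> real) \<Rightarrow> nat \<Rightarrow> real" where
  "sum_variance \<pi> P f N =
     path_expect \<pi> P N (\<lambda>xs. (sum_list (map f xs))^2)
     - (path_expect \<pi> P N (\<lambda>xs. sum_list (map f xs)))^2"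

definition asym_var ::
  "('a::finite \<Rightarrow> real) \<Rightarrow> ('a \<Rightarrow> 'a \<Rightarrow> real) \<Rightarrow> ('a \<Rightarrow> real) \<Rightarrow> real" where
  "asym_var \<pi> P f = lim (\<lambda>N. sum_variance \<pi> P f N / real N)"

definition efficiency_dominates ::
  "('a::finite \<Rightarrow> real) \<Rightarrow> ('a \<Rightarrow> 'a \<Rightarrow> real) \<Rightarrow> ('a \<Rightarrow> 'a \<Rightarrow> real) \<Rightarrow> bool" where
  "efficiency_dominates \<pi> P Q \<longleftrightarrow> (\<forall>f. asym_var \<pi> P f \<le> asym_var \<pi> Q f)"

end

theory Submission
  imports Defs "HOL-Analysis.Analysis"
begin


definition papp :: "('a::finite \<Rightarrow> 'a \<Rightarrow> real) \<Rightarrow> ('a \<Rightarrow> real) \<Rightarrow> 'a \<Rightarrow> real" where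
  "papp P h x = (\<Sum>y\<in>UNIV. P x y * h y)"

definition pw :: "('a::finite \<Rightarrow> 'a \<Rightarrow> real) \<Rightarrow> nat \<Rightarrow> ('a \<Rightarrow> real) \<Rightarrow> 'a \<Rightarrow> real" where
  "pw P k h = (papp P ^^ k) h"

definition ip :: "('a::finite \<Rightarrow> real) \<Rightarrow> ('a \<Rightarrow> real) \<Rightarrow> ('a \<Rightarrow> real) \<Rightarrow> real" where
  "ip \<pi> u w = (\<Sum>x\<in>UNIV. \<pi> x * u x * w x)"

definition dir :: "('a::finite \<Rightarrow> real) \<Rightarrow> ('a \<Rightarrow> 'a \<Rightarrow> real) \<Rightarrow> ('a \<Rightarrow> real) \<Rightarrow> real" where
  "dir \<pi> P h = ip \<pi> h (\<lambda>x. h x - papp P h x)"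

lemma pw_0[simp]: "pw P 0 h = h" by (simp add: pw_def)
lemma pw_Suc: "pw P (Suc k) h = papp P (pw P k h)" by (simp add: pw_def)

lemma stat:
  assumes "transition_matrix P" "reversible \<pi> P"
  shows "(\<Sum>x\<in>UNIV. \<pi> x * papp P h x) = (\<Sum>x\<in>UNIV. \<pi> x * h x)"
proof -
  have "(\<Sum>x\<in>UNIV. \<pi> x * papp P h x) = (\<Sum>x\<in>UNIV. \<Sum>y\<in>UNIV. \<pi> x * P x y * h y)"
    by (simp add: papp_def sum_distrib_left mult.assoc)
  also have "\<dots> = (\<Sum>y\<in>UNIV. \<Sum>x\<in>UNIV. \<pi> y * P y x * h y)"
    using assms(2) unfolding reversible_def by (subst sum.swap) simp
  also have "\<dots> = (\<Sum>y\<in>UNIV. \<pi> y * h y * (\<Sum>x\<in>UNIV. P y x))"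
    by (simp add: sum_distrib_left mult_ac)
  also have "\<dots> = (\<Sum>x\<in>UNIV. \<pi> x * h x)"
    using assms(1) unfolding transition_matrix_def by simp
  finally show ?thesis .
qed

lemma stat_pw:
  assumes "transition_matrix P" "reversible \<pi> P"
  shows "(\<Sum>x\<in>UNIV. \<pi> x * pw P k h x) = (\<Sum>x\<in>UNIV. \<pi> x * h x)"
  by (induction k) (simp_all add: pw_Suc stat[OF assms])

lemma selfadj:
  assumes "reversible \<pi> P"
  shows "ip \<pi> u (papp P w) = ip \<pi> (papp P u) w"
proof -
  have "ip \<pi> u (papp P w) = (\<Sum>x\<in>UNIV. \<Sum>y\<in>UNIV. (\<pi> x * P x y) * u x * w y)"
    by (simp add: ip_def papp_def sum_distrib_left mult_ac)
  also have "\<dots> = (\<Sum>x\<in>UNIV. \<Sum>y\<in>UNIV. (\<pi> y * P y x) * u x * w y)"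
    using assms unfolding reversible_def by simp
  also have "\<dots> = (\<Sum>y\<in>UNIV. \<Sum>x\<in>UNIV. (\<pi> y * P y x) * u x * w y)"
    by (rule sum.swap)
  also have "\<dots> = ip \<pi> (papp P u) w"
    by (simp add: ip_def papp_def sum_distrib_left sum_distrib_right mult_ac)
  finally show ?thesis .
qed

lemma selfadj_pw:
  assumes "reversible \<pi> P"
  shows "ip \<pi> u (pw P k w) = ip \<pi> (pw P k u) w"
proof (induction k arbitrary: u w)
  case 0 then show ?case by simp
next
  case (Suc k)
  have "ip \<pi> u (pw P (Suc k) w) = ip \<pi> (papp P u) (pw P k w)"
    by (simp add: pw_Suc selfadj[OF assms])
  also have "\<dots> = ip \<pi> (pw P k (papp P u)) w" by (rule Suc)
  also have "pw P k (papp P u) = pw P (Suc k) u"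
    by (simp only: pw_def funpow_Suc_right comp_def)
  finally show ?case .
qed

lemma ip_sym: "ip \<pi> u w = ip \<pi> w u"
  by (simp add: ip_def mult_ac)

lemma papp_diff: "papp P (\<lambda>x. u x - w x) = (\<lambda>x. papp P u x - papp P w x)"
  by (simp add: papp_def fun_eq_iff right_diff_distrib sum_subtractf)

lemma papp_add: "papp P (\<lambda>x. u x + w x) = (\<lambda>x. papp P u x + papp P w x)"
  by (simp add: papp_def fun_eq_iff distrib_left sum.distrib)

lemma papp_const:
  assumes "transition_matrix P"
  shows "papp P (\<lambda>x. c) = (\<lambda>x. c)"
  using assms by (simp add: papp_def fun_eq_iff transition_matrix_def sum_distrib_right[symmetric])

lemma pw_diff: "pw P k (\<lambda>x. u x - w x) = (\<lambda>x. pw P k u x - pw P k w x)"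
  by (induction k) (simp_all add: pw_Suc papp_diff)

lemma pw_add_const:
  assumes "transition_matrix P"
  shows "pw P k (\<lambda>x. u x + c) = (\<lambda>x. pw P k u x + c)"
  by (induction k) (simp_all add: pw_Suc papp_add papp_const[OF assms])

lemma papp_bound:
  assumes "transition_matrix P" "\<And>x. \<bar>h x\<bar> \<le> B"
  shows "\<bar>papp P h x\<bar> \<le> B"
proof -
  have "\<bar>papp P h x\<bar> \<le> (\<Sum>y\<in>UNIV. \<bar>P x y * h y\<bar>)"
    unfolding papp_def by (rule sum_abs)
  also have "\<dots> \<le> (\<Sum>y\<in>UNIV. P x y * B)"
    using assms unfolding transition_matrix_def
    by (intro sum_mono) (simp add: abs_mult mult_left_mono)
  also have "\<dots> = B" using assms(1) unfolding transition_matrix_def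
    by (simp add: sum_distrib_right[symmetric])
  finally show ?thesis .
qed

lemma pw_bound:
  assumes "transition_matrix P" "\<And>x. \<bar>h x\<bar> \<le> B"
  shows "\<bar>pw P k h x\<bar> \<le> B"
  using assms(2) by (induction k arbitrary: x) (simp_all add: pw_Suc papp_bound[OF assms(1)])

lemma dir_formula:
  assumes "transition_matrix P" "reversible \<pi> P"
  shows "2 * dir \<pi> P h = (\<Sum>x\<in>UNIV. \<Sum>y\<in>UNIV. \<pi> x * P x y * (h x - h y)^2)"
proof -
  have e1: "(\<Sum>x\<in>UNIV. \<Sum>y\<in>UNIV. \<pi> x * P x y * (h x)^2) = (\<Sum>x\<in>UNIV. \<pi> x * (h x)^2)"
    using assms(1) unfolding transition_matrix_def
    by (simp add: sum_distrib_right[symmetric] sum_distrib_left[symmetric] mult_ac)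
  have e2: "(\<Sum>x\<in>UNIV. \<Sum>y\<in>UNIV. \<pi> x * P x y * (h y)^2) = (\<Sum>x\<in>UNIV. \<pi> x * (h x)^2)"
    using stat[OF assms, of "\<lambda>y. (h y)^2"]
    by (simp add: papp_def sum_distrib_left mult_ac)
  have e3: "(\<Sum>x\<in>UNIV. \<Sum>y\<in>UNIV. \<pi> x * P x y * (h x * h y)) = ip \<pi> h (papp P h)"
    by (simp add: ip_def papp_def sum_distrib_left mult_ac)
  have "(\<Sum>x\<in>UNIV. \<Sum>y\<in>UNIV. \<pi> x * P x y * (h x - h y)^2) =
     (\<Sum>x\<in>UNIV. \<Sum>y\<in>UNIV. \<pi> x * P x y * (h x)^2) + (\<Sum>x\<in>UNIV. \<Sum>y\<in>UNIV. \<pi> x * P x y * (h y)^2)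
     - 2 * (\<Sum>x\<in>UNIV. \<Sum>y\<in>UNIV. \<pi> x * P x y * (h x * h y))"
    by (simp add: power2_diff algebra_simps sum.distrib sum_subtractf sum_distrib_left)
  also have "\<dots> = 2 * dir \<pi> P h"
    unfolding e1 e2 e3 by (simp add: dir_def ip_def right_diff_distrib sum_subtractf power2_eq_square mult_ac)
  finally show ?thesis ..
qed

lemma dir_nonneg:
  assumes "transition_matrix P" "reversible \<pi> P" "\<And>x. \<pi> x > 0"
  shows "0 \<le> dir \<pi> P h"
proof -
  have "0 \<le> (\<Sum>x\<in>UNIV. \<Sum>y\<in>UNIV. \<pi> x * P x y * (h x - h y)^2)"
    using assms unfolding transition_matrix_def
    by (intro sum_nonneg mult_nonneg_nonneg) (auto intro: less_imp_le)
  then show ?thesis using dir_formula[OF assms(1,2), of h] by simp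
qed

lemma dir_zero_edge:
  assumes "transition_matrix P" "reversible \<pi> P" "\<And>x. \<pi> x > 0"
    and "dir \<pi> P h = 0" "P x y \<noteq> 0"
  shows "h x = h y"
proof -
  have nn: "\<And>x y. 0 \<le> \<pi> x * P x y * (h x - h y)^2"
    using assms(1,3) unfolding transition_matrix_def
    by (intro mult_nonneg_nonneg) (auto intro: less_imp_le)
  have "(\<Sum>x\<in>UNIV. \<Sum>y\<in>UNIV. \<pi> x * P x y * (h x - h y)^2) = 0"
    using dir_formula[OF assms(1,2), of h] assms(4) by simp
  then have "\<forall>x\<in>UNIV. (\<Sum>y\<in>UNIV. \<pi> x * P x y * (h x - h y)^2) = 0"
    by (subst (asm) sum_nonneg_eq_0_iff) (auto intro: sum_nonneg nn)
  then have "\<pi> x * P x y * (h x - h y)^2 = 0"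
    using sum_nonneg_eq_0_iff[of UNIV "\<lambda>y. \<pi> x * P x y * (h x - h y)^2"] nn by auto
  then show ?thesis using assms(3)[of x] assms(5) by simp
qed



definition EE :: "('a::finite \<Rightarrow> 'a \<Rightarrow> real) \<Rightarrow> 'a \<Rightarrow> nat \<Rightarrow> ('a list \<Rightarrow> real) \<Rightarrow> real" where
  "EE P x n F = (\<Sum>ys\<in>{ys. length ys = n}. chain_weight P x ys * F ys)"

lemma sum_lists_Suc:
  "(\<Sum>xs\<in>{xs::'a::finite list. length xs = Suc n}. G xs) =
   (\<Sum>y\<in>UNIV. \<Sum>ys\<in>{ys. length ys = n}. G (y#ys))"
proof -
  have eq: "{xs::'a list. length xs = Suc n} = (\<lambda>(y,ys). y#ys) ` (UNIV \<times> {ys. length ys = n})"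
    by (auto simp: length_Suc_conv image_iff)
  have inj: "inj_on (\<lambda>(y,ys). y#ys) (UNIV \<times> {ys::'a list. length ys = n})"
    by (auto simp: inj_on_def)
  show ?thesis
    unfolding eq sum.reindex[OF inj] by (simp add: sum.cartesian_product finite_list_length case_prod_unfold)
qed

lemma EE_Suc: "EE P x (Suc n) F = (\<Sum>y\<in>UNIV. P x y * EE P y n (\<lambda>ys. F (y#ys)))"
  unfolding EE_def sum_lists_Suc by (simp add: sum_distrib_left mult_ac)

lemma EE_0: "EE P x 0 F = F []"
  unfolding EE_def by simp

lemma EE_one:
  assumes "transition_matrix P"
  shows "EE P x n (\<lambda>_. 1) = 1"
proof (induction n arbitrary: x)
  case 0 then show ?case by (simp add: EE_0)
next
  case (Suc n) then show ?case using assms by (simp add: EE_Suc transition_matrix_def)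
qed

lemma EE_const:
  assumes "transition_matrix P"
  shows "EE P x n (\<lambda>_. c) = c"
  using EE_one[OF assms, of x n] unfolding EE_def by (simp add: sum_distrib_right[symmetric])

lemma EE_cong:
  assumes "\<And>ys. length ys = n \<Longrightarrow> F ys = G ys"
  shows "EE P x n F = EE P x n G"
  unfolding EE_def using assms by (intro sum.cong) auto

lemma EE_sum: "EE P x n (\<lambda>ys. \<Sum>i\<in>I. F i ys) = (\<Sum>i\<in>I. EE P x n (F i))"
  unfolding EE_def by (simp add: sum_distrib_left sum.swap[of _ I])

lemma EE_one_point:
  assumes "transition_matrix P" "i < n"
  shows "EE P x n (\<lambda>ys. u (ys!i)) = pw P (Suc i) u x"
  using assms(2)
proof (induction i arbitrary: x n)
  case 0
  then obtain m where n: "n = Suc m" by (cases n) auto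
  show ?case using EE_const[OF assms(1)] by (simp add: n EE_Suc pw_Suc papp_def)
next
  case (Suc i)
  then obtain m where n: "n = Suc m" and im: "i < m" by (cases n) auto
  show ?case using Suc.IH[OF im] by (simp add: n EE_Suc pw_Suc[of P "Suc i"] papp_def)
qed

lemma EE_two_point:
  assumes "transition_matrix P" "i < j" "j < n"
  shows "EE P x n (\<lambda>ys. u (ys!i) * w (ys!j)) = pw P (Suc i) (\<lambda>z. u z * pw P (j - i) w z) x"
  using assms(2,3)
proof (induction i arbitrary: x n j)
  case 0
  then obtain m j' where n: "n = Suc m" and j: "j = Suc j'" and jm: "j' < m"
    by (cases n; cases j) auto
  have "\<And>y. EE P y m (\<lambda>ys. u y * w (ys!j')) = u y * pw P j w y"
  proof -
    fix y
    have "EE P y m (\<lambda>ys. u y * w (ys!j')) = u y * EE P y m (\<lambda>ys. w (ys!j'))"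
      unfolding EE_def by (simp add: sum_distrib_left mult_ac)
    then show "EE P y m (\<lambda>ys. u y * w (ys!j')) = u y * pw P j w y"
      using EE_one_point[OF assms(1) jm] j by simp
  qed
  then show ?case by (simp add: n j EE_Suc pw_Suc papp_def mult_ac)
next
  case (Suc i)
  then obtain m j' where n: "n = Suc m" and j: "j = Suc j'" and ij: "i < j'" and jm: "j' < m"
    by (cases n; cases j) auto
  show ?case using Suc.IH[OF ij jm] j by (simp add: n EE_Suc pw_Suc[of P "Suc i"] papp_def)
qed



lemma path_expect_EE:
  assumes "prob_dist \<pi>" "transition_matrix P" "reversible \<pi> P"
  shows "path_expect \<pi> P N F = (\<Sum>z\<in>UNIV. \<pi> z * EE P z N F)"
proof (cases N)
  case 0
  have "{xs::'a list. length xs = 0} = {[]}" by auto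
  then show ?thesis using assms(1) unfolding 0 path_expect_def prob_dist_def
    by (simp add: EE_0 sum_distrib_right[symmetric])
next
  case (Suc n)
  have "path_expect \<pi> P N F = (\<Sum>x\<in>UNIV. \<pi> x * EE P x n (\<lambda>ys. F (x#ys)))"
    unfolding Suc path_expect_def sum_lists_Suc EE_def by (simp add: sum_distrib_left mult_ac)
  also have "\<dots> = (\<Sum>z\<in>UNIV. \<pi> z * papp P (\<lambda>x. EE P x n (\<lambda>ys. F (x#ys))) z)"
    using stat[OF assms(2,3)] by metis
  also have "\<dots> = (\<Sum>z\<in>UNIV. \<pi> z * EE P z N F)"
    unfolding Suc EE_Suc papp_def ..
  finally show ?thesis .
qed

definition dd :: "nat \<Rightarrow> nat \<Rightarrow> nat" where "dd i j = (if i \<le> j then j - i else i - j)"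

lemma sum_list_nth: "sum_list (map f ys) = (\<Sum>i<length ys. f (ys!i))"
  by (simp add: sum_list_sum_nth atLeast0LessThan)

lemma cross_moment:
  assumes "prob_dist \<pi>" "transition_matrix P" "reversible \<pi> P" "i < N" "j < N"
  shows "(\<Sum>z\<in>UNIV. \<pi> z * EE P z N (\<lambda>ys. f (ys!i) * f (ys!j))) = ip \<pi> f (pw P (dd i j) f)"
proof -
  have lt: "(\<Sum>z\<in>UNIV. \<pi> z * EE P z N (\<lambda>ys. f (ys!i) * f (ys!j))) = ip \<pi> f (pw P (j - i) f)"
    if "i < j" "j < N" for i j
    using that EE_two_point[OF assms(2) that, of _ f f] stat_pw[OF assms(2,3)]
    by (simp add: ip_def mult_ac)
  consider "i < j" | "i = j" | "j < i" by arith
  then show ?thesis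
  proof cases
    case 1 then show ?thesis using lt[OF 1 assms(5)] by (simp add: dd_def)
  next
    case 2
    then show ?thesis
      using EE_one_point[OF assms(2,4), of _ "\<lambda>z. f z * f z"] stat_pw[OF assms(2,3)]
      by (simp add: ip_def dd_def mult_ac)
  next
    case 3 then show ?thesis using lt[OF 3 assms(4)] by (simp add: dd_def mult.commute)
  qed
qed

lemma second_moment:
  assumes "prob_dist \<pi>" "transition_matrix P" "reversible \<pi> P"
  shows "path_expect \<pi> P N (\<lambda>xs. (sum_list (map f xs))^2) = (\<Sum>i<N. \<Sum>j<N. ip \<pi> f (pw P (dd i j) f))"
proof -
  have "path_expect \<pi> P N (\<lambda>xs. (sum_list (map f xs))^2) =
        (\<Sum>z\<in>UNIV. \<pi> z * EE P z N (\<lambda>ys. \<Sum>i<N. \<Sum>j<N. f (ys!i) * f (ys!j)))"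
    unfolding path_expect_EE[OF assms]
    by (intro sum.cong refl arg_cong2[where f="(*)"] EE_cong)
       (simp add: sum_list_nth power2_eq_square sum_product)
  also have "\<dots> = (\<Sum>i<N. \<Sum>j<N. \<Sum>z\<in>UNIV. \<pi> z * EE P z N (\<lambda>ys. f (ys!i) * f (ys!j)))"
    by (simp add: EE_sum sum_distrib_left sum.swap[of _ UNIV])
  also have "\<dots> = (\<Sum>i<N. \<Sum>j<N. ip \<pi> f (pw P (dd i j) f))"
    by (intro sum.cong refl cross_moment[OF assms]) auto
  finally show ?thesis .
qed

lemma first_moment:
  assumes "prob_dist \<pi>" "transition_matrix P" "reversible \<pi> P"
  shows "path_expect \<pi> P N (\<lambda>xs. sum_list (map f xs)) = real N * (\<Sum>x\<in>UNIV. \<pi> x * f x)"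
proof -
  have "path_expect \<pi> P N (\<lambda>xs. sum_list (map f xs)) =
        (\<Sum>z\<in>UNIV. \<pi> z * EE P z N (\<lambda>ys. \<Sum>i<N. f (ys!i)))"
    unfolding path_expect_EE[OF assms]
    by (intro sum.cong refl arg_cong2[where f="(*)"] EE_cong) (simp add: sum_list_nth)
  also have "\<dots> = (\<Sum>i<N. \<Sum>z\<in>UNIV. \<pi> z * EE P z N (\<lambda>ys. f (ys!i)))"
    by (simp add: EE_sum sum_distrib_left sum.swap[of _ UNIV])
  also have "\<dots> = (\<Sum>i<N. (\<Sum>x\<in>UNIV. \<pi> x * f x))"
  proof (rule sum.cong[OF refl])
    fix i assume "i \<in> {..<N}"
    then have "(\<Sum>z\<in>UNIV. \<pi> z * EE P z N (\<lambda>ys. f (ys!i))) = (\<Sum>z\<in>UNIV. \<pi> z * pw P (Suc i) f z)"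
      by (intro sum.cong refl) (simp add: EE_one_point[OF assms(2)])
    then show "(\<Sum>z\<in>UNIV. \<pi> z * EE P z N (\<lambda>ys. f (ys!i))) = (\<Sum>x\<in>UNIV. \<pi> x * f x)"
      using stat_pw[OF assms(2,3)] by simp
  qed
  finally show ?thesis by simp
qed

lemma sum_variance_formula:
  fixes f :: "'a::finite \<Rightarrow> real"
  assumes "prob_dist \<pi>" "transition_matrix P" "reversible \<pi> P"
  defines "\<mu> \<equiv> (\<Sum>x\<in>UNIV. \<pi> x * f x)"
  defines "f0 \<equiv> (\<lambda>x. f x - \<mu>)"
  shows "sum_variance \<pi> P f N = (\<Sum>i<N. \<Sum>j<N. ip \<pi> f0 (pw P (dd i j) f0))"
proof -
  have s1: "(\<Sum>x\<in>UNIV. \<pi> x) = 1" using assms(1) by (simp add: prob_dist_def)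
  have m0: "(\<Sum>x\<in>UNIV. \<pi> x * f0 x) = 0"
    using s1 by (simp add: f0_def right_diff_distrib sum_subtractf \<mu>_def sum_distrib_right[symmetric])
  have key: "ip \<pi> f (pw P k f) = ip \<pi> f0 (pw P k f0) + \<mu>^2" for k
  proof -
    have ff: "f = (\<lambda>x. f0 x + \<mu>)" by (simp add: f0_def)
    have pk: "pw P k f = (\<lambda>x. pw P k f0 x + \<mu>)"
      by (subst ff, rule pw_add_const[OF assms(2)])
    have m1: "(\<Sum>x\<in>UNIV. \<pi> x * pw P k f0 x) = 0" using m0 stat_pw[OF assms(2,3)] by simp
    have "ip \<pi> f (pw P k f) = (\<Sum>x\<in>UNIV. \<pi> x * (f0 x + \<mu>) * (pw P k f0 x + \<mu>))"
      unfolding ip_def pk by (subst ff) simp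
    also have "\<dots> = ip \<pi> f0 (pw P k f0) + \<mu> * (\<Sum>x\<in>UNIV. \<pi> x * pw P k f0 x)
        + \<mu> * (\<Sum>x\<in>UNIV. \<pi> x * f0 x) + \<mu>^2 * (\<Sum>x\<in>UNIV. \<pi> x)"
      by (simp add: ip_def algebra_simps sum.distrib sum_distrib_left power2_eq_square)
    finally show ?thesis using m0 m1 s1 by simp
  qed
  have "sum_variance \<pi> P f N = (\<Sum>i<N. \<Sum>j<N. ip \<pi> f0 (pw P (dd i j) f0) + \<mu>^2) - (real N * \<mu>)^2"
    unfolding sum_variance_def second_moment[OF assms(1-3)] first_moment[OF assms(1-3)] key
    \<mu>_def ..
  also have "\<dots> = (\<Sum>i<N. \<Sum>j<N. ip \<pi> f0 (pw P (dd i j) f0))"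
    by (simp add: sum.distrib power2_eq_square)
  finally show ?thesis .
qed



lemma tele1:
  fixes a c :: "nat \<Rightarrow> real"
  assumes "\<And>k. c k = a k - 2 * a (k+1) + a (k+2)"
  shows "(\<Sum>k<N. c (Suc k)) = (a 1 - a 2) - (a (N+1) - a (N+2))"
  by (induction N) (simp_all add: assms numeral_2_eq_2)

lemma tele2:
  fixes a c :: "nat \<Rightarrow> real"
  assumes "\<And>k. c k = a k - 2 * a (k+1) + a (k+2)"
  shows "(\<Sum>i<N. c (N - i)) = (a 1 - a 2) - (a (N+1) - a (N+2))"
proof -
  have "(\<Sum>i<N. c (N - i)) = (\<Sum>i<N. (\<lambda>k. c (Suc k)) (N - Suc i))"
    by (intro sum.cong refl) (simp add: Suc_diff_Suc)
  also have "\<dots> = (\<Sum>k<N. c (Suc k))" by (rule sum.nat_diff_reindex)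
  finally show ?thesis using tele1[OF assms] by simp
qed

lemma double_sum_tele:
  fixes a c :: "nat \<Rightarrow> real"
  assumes "\<And>k. c k = a k - 2 * a (k+1) + a (k+2)"
  shows "(\<Sum>i<N. \<Sum>j<N. c (dd i j)) = real N * (a 0 - a 2) - 2 * (a 1 - a (N+1))"
proof (induction N)
  case 0 then show ?case by simp
next
  case (Suc N)
  have e1: "(\<Sum>i<N. c (dd i N)) = (\<Sum>i<N. c (N - i))"
    by (intro sum.cong refl) (simp add: dd_def)
  have e2: "(\<Sum>j<N. c (dd N j)) = (\<Sum>i<N. c (N - i))"
    by (intro sum.cong refl) (simp add: dd_def)
  have "(\<Sum>i<Suc N. \<Sum>j<Suc N. c (dd i j)) =
        (\<Sum>i<N. \<Sum>j<N. c (dd i j)) + (\<Sum>i<N. c (dd i N)) + (\<Sum>j<N. c (dd N j)) + c 0"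
    by (simp add: sum.distrib dd_def)
  also have "\<dots> = real (Suc N) * (a 0 - a 2) - 2 * (a 1 - a (Suc N + 1))"
    unfolding Suc e1 e2 tele2[OF assms] assms[of 0] by (simp add: algebra_simps numeral_2_eq_2)
  finally show ?case .
qed

lemma ip_diff1: "ip \<pi> (\<lambda>x. u x - v x) w = ip \<pi> u w - ip \<pi> v w"
  by (simp add: ip_def algebra_simps sum_subtractf)
lemma ip_diff2: "ip \<pi> w (\<lambda>x. u x - v x) = ip \<pi> w u - ip \<pi> w v"
  by (simp add: ip_def algebra_simps sum_subtractf)

lemma asym_var_formula:
  fixes f g :: "'a::finite \<Rightarrow> real"
  assumes "prob_dist \<pi>" "transition_matrix P" "reversible \<pi> P"
    and g: "\<And>x. g x - papp P g x = f x - (\<Sum>x\<in>UNIV. \<pi> x * f x)"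
  shows "asym_var \<pi> P f = ip \<pi> g g - ip \<pi> g (pw P 2 g)"
proof -
  define a where "a k = ip \<pi> g (pw P k g)" for k
  define f0 where "f0 = (\<lambda>x. f x - (\<Sum>x\<in>UNIV. \<pi> x * f x))"
  have f0: "f0 = (\<lambda>x. g x - papp P g x)" using g by (simp add: f0_def)
  have pwf0: "pw P k f0 = (\<lambda>x. pw P k g x - pw P (Suc k) g x)" for k
  proof -
    have "pw P k (papp P g) = pw P (Suc k) g"
      by (simp only: pw_def funpow_Suc_right comp_def)
    then show ?thesis unfolding f0 pw_diff by simp
  qed
  have sh: "ip \<pi> (papp P g) (pw P k g) = a (Suc k)" for k
    unfolding a_def by (simp add: selfadj[OF assms(3), symmetric] pw_Suc)
  have c: "ip \<pi> f0 (pw P k f0) = a k - 2 * a (k+1) + a (k+2)" for k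
  proof -
    have "ip \<pi> f0 (pw P k f0) = a k - a (Suc k) - ip \<pi> (papp P g) (pw P k g) + ip \<pi> (papp P g) (pw P (Suc k) g)"
      unfolding pwf0 ip_diff2 unfolding f0 ip_diff1 a_def by simp
    then show ?thesis unfolding sh by simp
  qed
  have sv: "sum_variance \<pi> P f N = real N * (a 0 - a 2) - 2 * (a 1 - a (N+1))" for N
    unfolding sum_variance_formula[OF assms(1-3)] f0_def[symmetric]
    by (rule double_sum_tele) (rule c)
  define B where "B = (\<Sum>x\<in>UNIV. \<bar>g x\<bar>)"
  define K where "K = (\<Sum>x\<in>UNIV. \<bar>\<pi> x * g x\<bar> * B)"
  have gB: "\<bar>g x\<bar> \<le> B" for x
    unfolding B_def by (rule member_le_sum) auto
  have aK: "\<bar>a k\<bar> \<le> K" for k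
  proof -
    have "\<bar>a k\<bar> \<le> (\<Sum>x\<in>UNIV. \<bar>\<pi> x * g x * pw P k g x\<bar>)"
      unfolding a_def ip_def by (rule sum_abs)
    also have "\<dots> \<le> K" unfolding K_def
      by (intro sum_mono) (simp add: abs_mult mult_left_mono pw_bound[OF assms(2) gB])
    finally show ?thesis .
  qed
  have lim0: "(\<lambda>N. 2 * (a 1 - a (N+1)) / real N) \<longlonglongrightarrow> 0"
  proof (rule Lim_null_comparison)
    show "\<forall>\<^sub>F N in sequentially. norm (2 * (a 1 - a (N+1)) / real N) \<le> 4 * K / real N"
    proof (rule eventuallyI)
      fix N
      have "\<bar>2 * (a 1 - a (N+1))\<bar> \<le> 4 * K" using aK[of 1] aK[of "N+1"] by (simp add: abs_mult abs_le_iff)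
      then show "norm (2 * (a 1 - a (N+1)) / real N) \<le> 4 * K / real N"
        by (simp add: abs_divide divide_right_mono)
    qed
    show "(\<lambda>N. 4 * K / real N) \<longlonglongrightarrow> 0" by (rule lim_const_over_n)
  qed
  have "(\<lambda>N. sum_variance \<pi> P f N / real N) \<longlonglongrightarrow> a 0 - a 2 - 0"
  proof (rule Lim_transform_eventually)
    show "(\<lambda>N. a 0 - a 2 - 2 * (a 1 - a (N+1)) / real N) \<longlonglongrightarrow> a 0 - a 2 - 0"
      by (intro tendsto_intros lim0)
    show "\<forall>\<^sub>F N in sequentially. a 0 - a 2 - 2 * (a 1 - a (N+1)) / real N = sum_variance \<pi> P f N / real N"
      using eventually_gt_at_top[of 0]
      by eventually_elim (simp add: sv field_simps)
  qed
  then have "asym_var \<pi> P f = a 0 - a 2" unfolding asym_var_def by (simp add: limI)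
  then show ?thesis by (simp add: a_def)
qed



definition TT :: "('a::finite \<Rightarrow> real) \<Rightarrow> ('a \<Rightarrow> 'a \<Rightarrow> real) \<Rightarrow> ('a \<Rightarrow> real) \<Rightarrow> 'a \<Rightarrow> real" where
  "TT \<pi> P g x = g x - papp P g x + (\<Sum>z\<in>UNIV. \<pi> z * g z)"

definition Tv :: "('a::finite \<Rightarrow> real) \<Rightarrow> ('a \<Rightarrow> 'a \<Rightarrow> real) \<Rightarrow> real^'a \<Rightarrow> real^'a" where
  "Tv \<pi> P v = (\<chi> x. TT \<pi> P (vec_nth v) x)"

lemma papp_scale: "papp P (\<lambda>x. c * u x) = (\<lambda>x. c * papp P u x)"
  by (simp add: papp_def fun_eq_iff sum_distrib_left mult_ac)

lemma TT_add: "TT \<pi> P (\<lambda>y. u y + w y) x = TT \<pi> P u x + TT \<pi> P w x"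
  unfolding TT_def papp_add by (simp add: sum.distrib algebra_simps)

lemma TT_scale: "TT \<pi> P (\<lambda>y. c * u y) x = c * TT \<pi> P u x"
  unfolding TT_def papp_scale by (simp add: sum_distrib_left algebra_simps)

lemma Tv_linear: "linear (Tv \<pi> P)"
proof (rule linearI)
  fix b1 b2 :: "real^'a"
  have "vec_nth (b1 + b2) = (\<lambda>y. b1 $ y + b2 $ y)" by (simp add: fun_eq_iff)
  then show "Tv \<pi> P (b1 + b2) = Tv \<pi> P b1 + Tv \<pi> P b2"
    unfolding Tv_def by (simp only: vec_eq_iff vec_lambda_beta vector_add_component TT_add) simp
next
  fix r :: real and b :: "real^'a"
  have "vec_nth (r *\<^sub>R b) = (\<lambda>y. r * b $ y)" by (simp add: fun_eq_iff)
  then show "Tv \<pi> P (r *\<^sub>R b) = r *\<^sub>R Tv \<pi> P b"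
    unfolding Tv_def by (simp only: vec_eq_iff vec_lambda_beta vector_scaleR_component TT_scale) simp
qed

definition kernel_const :: "('a::finite \<Rightarrow> real) \<Rightarrow> ('a \<Rightarrow> 'a \<Rightarrow> real) \<Rightarrow> bool" where
  "kernel_const \<pi> P \<longleftrightarrow> (\<forall>g. dir \<pi> P g = 0 \<longrightarrow> (\<forall>x y. g x = g y))"

lemma poisson_exists:
  assumes "prob_dist \<pi>" "transition_matrix P" "reversible \<pi> P" "kernel_const \<pi> P"
    and m: "(\<Sum>x\<in>UNIV. \<pi> x * f0 x) = 0"
  shows "\<exists>g. \<forall>x. g x - papp P g x = f0 x"
proof -
  have s1: "(\<Sum>x\<in>UNIV. \<pi> x) = 1" using assms(1) by (simp add: prob_dist_def)
  have sumT: "(\<Sum>x\<in>UNIV. \<pi> x * TT \<pi> P g x) = (\<Sum>z\<in>UNIV. \<pi> z * g z)" for g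
  proof -
    have "(\<Sum>x\<in>UNIV. \<pi> x * TT \<pi> P g x) = (\<Sum>x\<in>UNIV. \<pi> x * g x) - (\<Sum>x\<in>UNIV. \<pi> x * papp P g x)
          + (\<Sum>x\<in>UNIV. \<pi> x) * (\<Sum>z\<in>UNIV. \<pi> z * g z)"
      by (simp add: TT_def algebra_simps sum.distrib sum_subtractf sum_distrib_right)
    then show ?thesis using stat[OF assms(2,3)] s1 by simp
  qed
  have inj: "inj (Tv \<pi> P)"
    unfolding linear_injective_0[OF Tv_linear]
  proof (intro allI impI)
    fix v :: "real^'a" assume "Tv \<pi> P v = 0"
    then have T0: "TT \<pi> P (vec_nth v) x = 0" for x
      by (simp add: Tv_def vec_eq_iff)
    define g where "g = vec_nth v"
    have c0: "(\<Sum>z\<in>UNIV. \<pi> z * g z) = 0"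
      using sumT[of g] T0 by (simp add: g_def)
    then have h: "g x - papp P g x = 0" for x using T0[of x] by (simp add: TT_def g_def)
    have "dir \<pi> P g = 0" unfolding dir_def ip_def using h by simp
    then have const: "g x = g y" for x y using assms(4) unfolding kernel_const_def by blast
    fix x0
    have "(\<Sum>z\<in>UNIV. \<pi> z * g z) = (\<Sum>z\<in>UNIV. \<pi> z * g x0)"
      by (intro sum.cong refl) (metis const)
    also have "\<dots> = (\<Sum>z\<in>UNIV. \<pi> z) * g x0" by (simp add: sum_distrib_right)
    finally have "(\<Sum>z\<in>UNIV. \<pi> z * g z) = (\<Sum>z\<in>UNIV. \<pi> z) * g x0" .
    then have "g x0 = 0" using c0 s1 by simp
    then have "g = (\<lambda>_. 0)" using const by (metis)
    then show "v = 0" by (simp add: g_def vec_eq_iff)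
  qed
  have "surj (Tv \<pi> P)"
    using linear_injective_imp_surjective[OF Tv_linear inj] by simp
  then obtain v where v: "Tv \<pi> P v = (\<chi> x. f0 x)" by (metis surjD)
  define g where "g = vec_nth v"
  have T: "TT \<pi> P g x = f0 x" for x using v by (simp add: Tv_def vec_eq_iff g_def)
  have "(\<Sum>z\<in>UNIV. \<pi> z * g z) = 0" using sumT[of g] T m by simp
  then show ?thesis using T by (auto simp: TT_def)
qed



lemma dir_expand:
  assumes "reversible \<pi> P"
  shows "dir \<pi> P (\<lambda>x. g x - h x) = dir \<pi> P g - 2 * ip \<pi> (\<lambda>x. g x - papp P g x) h + dir \<pi> P h"
proof -
  have sa: "ip \<pi> g (papp P h) = ip \<pi> (papp P g) h" by (rule selfadj[OF assms])
  have "dir \<pi> P (\<lambda>x. g x - h x) = ip \<pi> g g - ip \<pi> g (papp P g) - ip \<pi> g h + ip \<pi> g (papp P h)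
         - ip \<pi> h g + ip \<pi> h (papp P g) + ip \<pi> h h - ip \<pi> h (papp P h)"
    unfolding dir_def papp_diff by (simp add: ip_def algebra_simps sum.distrib sum_subtractf sum_distrib_left)
  moreover have "dir \<pi> P g = ip \<pi> g g - ip \<pi> g (papp P g)"
    unfolding dir_def ip_diff2 ..
  moreover have "dir \<pi> P h = ip \<pi> h h - ip \<pi> h (papp P h)"
    unfolding dir_def ip_diff2 ..
  moreover have "ip \<pi> (\<lambda>x. g x - papp P g x) h = ip \<pi> g h - ip \<pi> (papp P g) h"
    unfolding ip_diff1 ..
  moreover have "ip \<pi> h g = ip \<pi> g h" "ip \<pi> h (papp P g) = ip \<pi> (papp P g) h"
    by (simp_all add: ip_sym)
  ultimately show ?thesis using sa by simp
qed

lemma variational: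
  assumes "transition_matrix P" "reversible \<pi> P" "\<And>x. \<pi> x > 0"
  shows "2 * ip \<pi> (\<lambda>x. g x - papp P g x) h - dir \<pi> P h \<le> dir \<pi> P g"
  using dir_nonneg[OF assms, of "\<lambda>x. g x - h x"] dir_expand[OF assms(2), of g h] by simp

lemma asym_var_dir:
  fixes f g :: "'a::finite \<Rightarrow> real"
  assumes "prob_dist \<pi>" "transition_matrix P" "reversible \<pi> P"
    and g: "\<And>x. g x - papp P g x = f x - (\<Sum>x\<in>UNIV. \<pi> x * f x)"
  shows "asym_var \<pi> P f = 2 * dir \<pi> P g - ip \<pi> (\<lambda>x. g x - papp P g x) (\<lambda>x. g x - papp P g x)"
proof -
  have "ip \<pi> (papp P g) (papp P g) = ip \<pi> g (pw P 2 g)"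
    by (simp add: selfadj[OF assms(3), symmetric] pw_Suc numeral_2_eq_2)
  moreover have "ip \<pi> g (papp P g) = ip \<pi> (papp P g) g" by (rule ip_sym)
  ultimately show ?thesis
    unfolding asym_var_formula[OF assms] dir_def ip_diff1 ip_diff2 by simp
qed

lemma core:
  assumes "prob_dist \<pi>"
    and P: "transition_matrix P" "reversible \<pi> P" "kernel_const \<pi> P"
    and P': "transition_matrix P'" "reversible \<pi> P'" "kernel_const \<pi> P'"
  shows "efficiency_dominates \<pi> P' P \<longleftrightarrow> (\<forall>h. dir \<pi> P h \<le> dir \<pi> P' h)"
proof
  have pos: "\<And>x. \<pi> x > 0" using assms(1) by (simp add: prob_dist_def)
  have mz: "(\<Sum>x\<in>UNIV. \<pi> x * (f x - (\<Sum>x\<in>UNIV. \<pi> x * f x))) = 0" for f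
    using assms(1) by (simp add: prob_dist_def right_diff_distrib sum_subtractf sum_distrib_right[symmetric])
  {
    assume dom: "efficiency_dominates \<pi> P' P"
    show "\<forall>h. dir \<pi> P h \<le> dir \<pi> P' h"
    proof
      fix h
      define f where "f = (\<lambda>x. h x - papp P h x)"
      have m0: "(\<Sum>x\<in>UNIV. \<pi> x * f x) = 0"
        using stat[OF P(1,2), of h] by (simp add: f_def right_diff_distrib sum_subtractf)
      obtain g' where g': "\<And>x. g' x - papp P' g' x = f x - (\<Sum>x\<in>UNIV. \<pi> x * f x)"
        using poisson_exists[OF assms(1) P', OF mz[of f]] by blast
      have hP: "\<And>x. h x - papp P h x = f x - (\<Sum>x\<in>UNIV. \<pi> x * f x)" using m0 by (simp add: f_def)
      have g'f: "(\<lambda>x. g' x - papp P' g' x) = f" using g' m0 by (simp add: fun_eq_iff)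
      have hf: "(\<lambda>x. h x - papp P h x) = f" by (simp add: f_def)
      have "asym_var \<pi> P' f \<le> asym_var \<pi> P f" using dom by (simp add: efficiency_dominates_def)
      then have "dir \<pi> P' g' \<le> dir \<pi> P h"
        unfolding asym_var_dir[OF assms(1) P'(1,2) g'] asym_var_dir[OF assms(1) P(1,2) hP] g'f hf
        by simp
      moreover have "2 * ip \<pi> f h - dir \<pi> P' h \<le> dir \<pi> P' g'"
        using variational[OF P'(1,2) pos, of g' h] g'f by simp
      moreover have "ip \<pi> f h = dir \<pi> P h" unfolding dir_def f_def by (rule ip_sym)
      ultimately show "dir \<pi> P h \<le> dir \<pi> P' h" by simp
    qed
  }
  {
    assume le: "\<forall>h. dir \<pi> P h \<le> dir \<pi> P' h"
    show "efficiency_dominates \<pi> P' P"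
      unfolding efficiency_dominates_def
    proof
      fix f :: "'a \<Rightarrow> real"
      define f0 where "f0 = (\<lambda>x. f x - (\<Sum>x\<in>UNIV. \<pi> x * f x))"
      obtain g where g: "\<And>x. g x - papp P g x = f x - (\<Sum>x\<in>UNIV. \<pi> x * f x)"
        using poisson_exists[OF assms(1) P, OF mz[of f]] by blast
      obtain g' where g': "\<And>x. g' x - papp P' g' x = f x - (\<Sum>x\<in>UNIV. \<pi> x * f x)"
        using poisson_exists[OF assms(1) P', OF mz[of f]] by blast
      have gf: "(\<lambda>x. g x - papp P g x) = f0" using g by (simp add: fun_eq_iff f0_def)
      have g'f: "(\<lambda>x. g' x - papp P' g' x) = f0" using g' by (simp add: fun_eq_iff f0_def)
      have "dir \<pi> P' g' = ip \<pi> f0 g'" unfolding dir_def g'f by (rule ip_sym)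
      moreover have "2 * ip \<pi> f0 g' - dir \<pi> P g' \<le> dir \<pi> P g"
        using variational[OF P(1,2) pos, of g g'] gf by simp
      moreover have "dir \<pi> P g' \<le> dir \<pi> P' g'" using le by blast
      ultimately have "dir \<pi> P' g' \<le> dir \<pi> P g" by simp
      then show "asym_var \<pi> P' f \<le> asym_var \<pi> P f"
        unfolding asym_var_dir[OF assms(1) P'(1,2) g'] asym_var_dir[OF assms(1) P(1,2) g] g'f gf
        by simp
    qed
  }
qed



lemma irr_kernel:
  assumes "prob_dist \<pi>" "transition_matrix P" "reversible \<pi> P" "irreducible_chain P"
  shows "kernel_const \<pi> P"
  unfolding kernel_const_def
proof (intro allI impI)
  fix g x y assume d: "dir \<pi> P g = 0"
  have pos: "\<And>x. \<pi> x > 0" using assms(1) by (simp add: prob_dist_def)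
  have step: "mat_pow P n x y \<noteq> 0 \<Longrightarrow> g x = g y" for n x y
  proof (induction n arbitrary: y)
    case 0 then show ?case by (simp split: if_splits)
  next
    case (Suc n)
    then obtain z where "mat_pow P n x z * P z y \<noteq> 0"
      by (metis (no_types, lifting) mat_pow.simps(2) sum.neutral)
    then have "mat_pow P n x z \<noteq> 0" "P z y \<noteq> 0" by auto
    then show ?case using Suc.IH dir_zero_edge[OF assms(2,3) pos d] by metis
  qed
  obtain n where "mat_pow P n x y > 0" using assms(4) unfolding irreducible_chain_def by blast
  then show "g x = g y" by (intro step[of n]) simp
qed

lemma mix_props:
  assumes "transition_matrix P" "reversible \<pi> P" "transition_matrix Q" "reversible \<pi> Q"
    and "0 < a" "a < 1"
  defines "M \<equiv> (\<lambda>x y. a * P x y + (1 - a) * Q x y)"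
  shows "transition_matrix M" "reversible \<pi> M"
    "\<And>h. dir \<pi> M h = a * dir \<pi> P h + (1 - a) * dir \<pi> Q h"
proof -
  show "transition_matrix M"
    using assms(1,3,5,6) unfolding transition_matrix_def M_def
    by (simp add: sum.distrib sum_distrib_left[symmetric])
  show "reversible \<pi> M"
    using assms(2,4) unfolding reversible_def M_def by (simp add: algebra_simps)
  fix h
  have pm: "papp M h x = a * papp P h x + (1 - a) * papp Q h x" for x
    unfolding papp_def M_def by (simp add: distrib_right sum.distrib sum_distrib_left mult.assoc)
  show "dir \<pi> M h = a * dir \<pi> P h + (1 - a) * dir \<pi> Q h"
    unfolding dir_def ip_def pm by (simp add: algebra_simps sum.distrib sum_distrib_left sum_subtractf)
qed

lemma mix_kernel:
  assumes "prob_dist \<pi>" "transition_matrix P" "reversible \<pi> P" "transition_matrix Q" "reversible \<pi> Q"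
    and "kernel_const \<pi> P" "0 < a" "a < 1"
  shows "kernel_const \<pi> (\<lambda>x y. a * P x y + (1 - a) * Q x y)"
  unfolding kernel_const_def
proof (intro allI impI)
  fix g x y assume d: "dir \<pi> (\<lambda>x y. a * P x y + (1 - a) * Q x y) g = 0"
  have pos: "\<And>x. \<pi> x > 0" using assms(1) by (simp add: prob_dist_def)
  have "a * dir \<pi> P g + (1 - a) * dir \<pi> Q g = 0"
    using d mix_props(3)[OF assms(2-5,7,8)] by simp
  moreover have "0 \<le> dir \<pi> P g" "0 \<le> dir \<pi> Q g"
    using dir_nonneg[OF assms(2,3) pos] dir_nonneg[OF assms(4,5) pos] by auto
  ultimately have "dir \<pi> P g = 0" using assms(7,8)
    by (smt (verit) mult_nonneg_nonneg mult_pos_pos)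
  then show "g x = g y" using assms(6) unfolding kernel_const_def by blast
qed

theorem theorem4:
  fixes \<pi> :: "'a::finite \<Rightarrow> real"
    and P P' Q :: "'a \<Rightarrow> 'a \<Rightarrow> real"
    and a :: real
  assumes "prob_dist \<pi>"
    and "transition_matrix P" and "transition_matrix P'" and "transition_matrix Q"
    and "reversible \<pi> P" and "reversible \<pi> P'" and "reversible \<pi> Q"
    and "irreducible_chain P" and "irreducible_chain P'"
    and "0 < a" and "a < 1"
  shows "efficiency_dominates \<pi> P' P \<longleftrightarrow>
         efficiency_dominates \<pi> (\<lambda>x y. a * P' x y + (1 - a) * Q x y)
                                 (\<lambda>x y. a * P x y + (1 - a) * Q x y)"
proof -
  have kP: "kernel_const \<pi> P" by (rule irr_kernel) (use assms in auto)
  have kP': "kernel_const \<pi> P'" by (rule irr_kernel) (use assms in auto)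
  note MP = mix_props[OF assms(2,5,4,7,10,11)]
  note MP' = mix_props[OF assms(3,6,4,7,10,11)]
  have kM: "kernel_const \<pi> (\<lambda>x y. a * P x y + (1 - a) * Q x y)"
    by (rule mix_kernel) (use assms kP in auto)
  have kM': "kernel_const \<pi> (\<lambda>x y. a * P' x y + (1 - a) * Q x y)"
    by (rule mix_kernel) (use assms kP' in auto)
  have "efficiency_dominates \<pi> P' P \<longleftrightarrow> (\<forall>h. dir \<pi> P h \<le> dir \<pi> P' h)"
    by (rule core) (use assms kP kP' in auto)
  also have "\<dots> \<longleftrightarrow> (\<forall>h. a * dir \<pi> P h + (1 - a) * dir \<pi> Q h \<le> a * dir \<pi> P' h + (1 - a) * dir \<pi> Q h)"
    using assms(10) by simp
  also have "\<dots> \<longleftrightarrow> efficiency_dominates \<pi> (\<lambda>x y. a * P' x y + (1 - a) * Q x y)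
                                 (\<lambda>x y. a * P x y + (1 - a) * Q x y)"
    by (subst core[OF assms(1) MP(1,2) kM MP'(1,2) kM']) (simp add: MP(3) MP'(3))
  finally show ?thesis .
qed

end
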